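(* There exist a DAG $G$ and positive integers $g$ and $r_0$ with $4\mid r_0$ such that $\mathrm{OPT}^{(2)}<\mathrm{OPT}^{(1)}$ and $\mathrm{OPT}^{(2)}<\mathrm{OPT}^{(4)}$, where $\mathrm{OPT}^{(j)}$ denotes the MPP optimum of $G$ with $j$ processors, each having fast memory of size $r_0/j$ (same $g$ in all cases).
   Context: Multiprocessor red-blue pebbling (MPP). Input: a DAG $G=(V,E)$ with $n=|V|$ and positive integers $k$ (number of processors), $r$ (fast-memory size per processor), $g$ (cost of an I/O step). $\Delta_{in}$ denotes the maximum in-degree of $G$; sources/sinks are nodes of in-degree/out-degree $0$. A configuration is a tuple $(R^1,\dots,R^k,B)$ of subsets of $V$ ($R^j$ = nodes carrying a red pebble of processor $j$, $B$ = nodes carrying a blue pebble); it is valid if $|R^j|\le r$ for all $j$. The initial configuration has all sets empty; a configuration is terminal if every sink lies in $B\cup\bigcup_j R^j$. The transition rules are: (R1) for some $m\le k$, pairwise distinct processors $j_1,\dots,j_m$ and nodes $v_1,\dots,v_m$ with $v_i\in R^{j_i}$, add each $v_i$ to $B$ (cost $g$); (R2) for some $m\le k$, pairwise distinct processors $j_1,\dots,j_m$ and nodes $v_1,\dots,v_m\in B$, add each $v_i$ to $R^{j_i}$ (cost $g$); (R3) for some $m\le k$, pairwise distinct processors $j_1,\dots,j_m$ and nodes $v_1,\dots,v_m$ such that every in-neighbor of $v_i$ lies in $R^{j_i}$, add each $v_i$ to $R^{j_i}$ (cost $1$); (R4) remove a single red or blue pebble (cost $0$). A pebbling strategy is a sequence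 of valid configurations starting at the initial configuration and ending at a terminal one, each obtained from its predecessor by one rule; its cost is the sum of the costs of the rules applied. $\mathrm{OPT}$ denotes the minimum cost of a pebbling strategy. Applications of (R1),(R2) are called I/O steps and applications of (R3) compute steps. *)

theory Defs
  imports Main
begin

text \<open>Processors are 0..<k.
A configuration is a pair (R, B): R j is the set of red pebbles of processor j
(required empty for j \<ge> k), B the set of blue pebbles.\<close>

type_synonym 'v config = "(nat \<Rightarrow> 'v set) \<times> 'v set"

definition is_dag :: "'v set \<Rightarrow> ('v \<times> 'v) set \<Rightarrow> bool" where
  "is_dag V E \<longleftrightarrow> finite V \<and> E \<subseteq> V \<times> V \<and> acyclic E"

definition in_nbrs :: "('v \<times> 'v) set \<Rightarrow> 'v \<Rightarrow> 'v set" where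
  "in_nbrs E v = {u. (u, v) \<in> E}"

definition sinks :: "'v set \<Rightarrow> ('v \<times> 'v) set \<Rightarrow> 'v set" where
  "sinks V E = {v \<in> V. \<forall>w. (v, w) \<notin> E}"

definition initial_config :: "'v config" where
  "initial_config = ((\<lambda>j. {}), {})"

definition valid_config :: "nat \<Rightarrow> nat \<Rightarrow> 'v config \<Rightarrow> bool" where
  "valid_config k r C \<longleftrightarrow> (\<forall>j<k. card (fst C j) \<le> r \<and> finite (fst C j)) \<and> (\<forall>j\<ge>k. fst C j = {})"

definition terminal_config :: "'v set \<Rightarrow> ('v \<times> 'v) set \<Rightarrow> 'v config \<Rightarrow> bool" where
  "terminal_config V E C \<longleftrightarrow> sinks V E \<subseteq> snd C \<union> (\<Union>j. fst C j)"

text \<open>A parallel selection: pairs (processor, node), processors pairwise distinct and < k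
(hence at most k pairs).\<close>
definition selection :: "nat \<Rightarrow> (nat \<times> 'v) set \<Rightarrow> bool" where
  "selection k S \<longleftrightarrow> finite S \<and> inj_on fst S \<and> fst ` S \<subseteq> {..<k}"

definition add_red :: "(nat \<Rightarrow> 'v set) \<Rightarrow> (nat \<times> 'v) set \<Rightarrow> nat \<Rightarrow> 'v set" where
  "add_red R S = (\<lambda>j. R j \<union> {v. (j, v) \<in> S})"

definition mpp_step :: "'v set \<Rightarrow> ('v \<times> 'v) set \<Rightarrow> nat \<Rightarrow> nat \<Rightarrow>
    'v config \<Rightarrow> 'v config \<Rightarrow> nat \<Rightarrow> bool" where
  "mpp_step V E k g C C' c \<longleftrightarrow>
     (let R = fst C; B = snd C in
       \<comment> \<open>R1: save to slow memory\<close>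
       (\<exists>S. selection k S \<and> (\<forall>(j, v)\<in>S. v \<in> R j) \<and> C' = (R, B \<union> snd ` S) \<and> c = g)
     \<or> \<comment> \<open>R2: load from slow memory\<close>
       (\<exists>S. selection k S \<and> (\<forall>(j, v)\<in>S. v \<in> B) \<and> C' = (add_red R S, B) \<and> c = g)
     \<or> \<comment> \<open>R3: compute\<close>
       (\<exists>S. selection k S \<and> (\<forall>(j, v)\<in>S. v \<in> V \<and> in_nbrs E v \<subseteq> R j)
            \<and> C' = (add_red R S, B) \<and> c = 1)
     \<or> \<comment> \<open>R4: remove a single pebble\<close>
       (((\<exists>j v. v \<in> R j \<and> C' = (R(j := R j - {v}), B)) \<or> (\<exists>v. v \<in> B \<and> C' = (R, B - {v})))
        \<and> c = 0))"

definition pebbling_strategy :: "'v set \<Rightarrow> ('v \<times> 'v) set \<Rightarrow> nat \<Rightarrow> nat \<Rightarrow> nat \<Rightarrow>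
    'v config list \<Rightarrow> nat list \<Rightarrow> bool" where
  "pebbling_strategy V E k r g cs costs \<longleftrightarrow>
     length cs = Suc (length costs) \<and>
     cs ! 0 = initial_config \<and>
     terminal_config V E (last cs) \<and>
     (\<forall>i < length cs. valid_config k r (cs ! i)) \<and>
     (\<forall>i < length costs. mpp_step V E k g (cs ! i) (cs ! Suc i) (costs ! i))"

definition has_strategy :: "'v set \<Rightarrow> ('v \<times> 'v) set \<Rightarrow> nat \<Rightarrow> nat \<Rightarrow> nat \<Rightarrow> bool" where
  "has_strategy V E k r g \<longleftrightarrow> (\<exists>cs costs. pebbling_strategy V E k r g cs costs)"

definition OPT :: "'v set \<Rightarrow> ('v \<times> 'v) set \<Rightarrow> nat \<Rightarrow> nat \<Rightarrow> nat \<Rightarrow> nat" where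
  "OPT V E k r g = (LEAST c. \<exists>cs costs. pebbling_strategy V E k r g cs costs \<and> sum_list costs = c)"

end

theory Submission
  imports Defs
begin

lemma less_trancl: "(x, y) \<in> {(u::nat, v). u < v}\<^sup>+ \<Longrightarrow> x < y"
  by (induction rule: trancl.induct) auto

lemma acyclic_less: "acyclic {(u::nat, v). u < v}"
  by (auto simp: acyclic_def dest: less_trancl)

lemma transition_exists: "\<not> P (0::nat) \<Longrightarrow> P n \<Longrightarrow> \<exists>t<n. \<not> P t \<and> P (Suc t)"
proof (induction n)
  case 0 then show ?case by simp
next
  case (Suc n)
  then show ?case by (cases "P n") (auto intro: less_SucI)
qed

lemma selection_card: "selection k S \<Longrightarrow> card S \<le> k"
proof -
  assume s: "selection k S"
  then have "card S = card (fst ` S)" unfolding selection_def by (simp add: card_image)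
  also have "\<dots> \<le> card {..<k}" using s unfolding selection_def by (intro card_mono) auto
  finally show ?thesis by simp
qed

lemma selection_one: "selection k S \<Longrightarrow> (j, v) \<in> S \<Longrightarrow> (j, w) \<in> S \<Longrightarrow> v = w"
  unfolding selection_def inj_on_def by force

definition pebbles :: "'v config \<Rightarrow> 'v set" where
  "pebbles C = snd C \<union> (\<Union>j. fst C j)"

lemma step_new:
  assumes "mpp_step V E k g C C' c"
  shows "\<exists>N. pebbles C' \<subseteq> pebbles C \<union> N \<and> finite N \<and> card N \<le> k * c \<and>
      (\<forall>v\<in>N. v \<in> V \<and> in_nbrs E v \<subseteq> pebbles C)"
  using assms unfolding mpp_step_def Let_def
proof (elim disjE exE conjE)
  fix S assume "selection k S" "\<forall>(j, v)\<in>S. v \<in> fst C j" "C' = (fst C, snd C \<union> snd ` S)" "c = g"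
  then show ?thesis by (intro exI[of _ "{}"]) (auto simp: pebbles_def)
next
  fix S assume "selection k S" "\<forall>(j, v)\<in>S. v \<in> snd C" "C' = (add_red (fst C) S, snd C)" "c = g"
  then show ?thesis by (intro exI[of _ "{}"]) (auto simp: pebbles_def add_red_def)
next
  fix S assume s: "selection k S" and h: "\<forall>(j, v)\<in>S. v \<in> V \<and> in_nbrs E v \<subseteq> fst C j"
    and c': "C' = (add_red (fst C) S, snd C)" and c: "c = 1"
  have fin: "finite S" using s by (simp add: selection_def)
  have "card (snd ` S) \<le> card S" using fin by (rule card_image_le)
  also have "\<dots> \<le> k" using s by (rule selection_card)
  finally have cd: "card (snd ` S) \<le> k * c" using c by simp
  show ?thesis
  proof (intro exI[of _ "snd ` S"] conjI)
    show "pebbles C' \<subseteq> pebbles C \<union> snd ` S" using c' by (force simp: pebbles_def add_red_def)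
    show "finite (snd ` S)" using fin by simp
    show "card (snd ` S) \<le> k * c" by (rule cd)
    show "\<forall>v\<in>snd ` S. v \<in> V \<and> in_nbrs E v \<subseteq> pebbles C"
      using h by (force simp: pebbles_def)
  qed
next
  fix j v assume "v \<in> fst C j" "C' = ((fst C)(j := fst C j - {v}), snd C)" "c = 0"
  then show ?thesis by (intro exI[of _ "{}"]) (auto simp: pebbles_def split: if_splits)
next
  fix v assume "v \<in> snd C" "C' = (fst C, snd C - {v})" "c = 0"
  then show ?thesis by (intro exI[of _ "{}"]) (auto simp: pebbles_def)
qed


lemma count_lb:
  assumes st: "pebbling_strategy V E k r g cs costs" and EV: "E \<subseteq> V \<times> V" and fV: "finite V"
  shows "\<exists>P. P \<subseteq> V \<and> card P \<le> k * sum_list costs \<and> sinks V E \<subseteq> P \<and> (\<forall>v\<in>P. in_nbrs E v \<subseteq> P)"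
proof -
  define Pf where "Pf i = (\<Union>t\<in>{..i}. pebbles (cs ! t)) \<inter> V" for i
  have len: "length cs = Suc (length costs)" and c0: "cs ! 0 = initial_config"
    and trm: "terminal_config V E (last cs)"
    and steps: "\<forall>i < length costs. mpp_step V E k g (cs ! i) (cs ! Suc i) (costs ! i)"
    using st unfolding pebbling_strategy_def by auto
  have inV: "in_nbrs E v \<subseteq> V" for v using EV unfolding in_nbrs_def by auto
  have finP: "finite (Pf i)" for i using fV unfolding Pf_def by simp
  have main: "i \<le> length costs \<longrightarrow> card (Pf i) \<le> k * sum_list (take i costs) \<and> (\<forall>v\<in>Pf i. in_nbrs E v \<subseteq> Pf i)" for i
  proof (induction i)
    case 0
    have "Pf 0 = {}" using c0 by (simp add: Pf_def pebbles_def initial_config_def)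
    then show ?case by simp
  next
    case (Suc i)
    show ?case
    proof
      assume le: "Suc i \<le> length costs"
      then have IH: "card (Pf i) \<le> k * sum_list (take i costs)" "\<forall>v\<in>Pf i. in_nbrs E v \<subseteq> Pf i"
        using Suc by auto
      from le steps have "mpp_step V E k g (cs ! i) (cs ! Suc i) (costs ! i)" by simp
      from step_new[OF this] obtain N where N: "pebbles (cs ! Suc i) \<subseteq> pebbles (cs ! i) \<union> N"
        "finite N" "card N \<le> k * (costs ! i)" "\<forall>v\<in>N. v \<in> V \<and> in_nbrs E v \<subseteq> pebbles (cs ! i)"
        by blast
      have PS: "Pf (Suc i) = Pf i \<union> (pebbles (cs ! Suc i) \<inter> V)"
        unfolding Pf_def by (auto simp: atMost_Suc)
      have pi: "pebbles (cs ! i) \<inter> V \<subseteq> Pf i" unfolding Pf_def by auto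
      have sub: "Pf (Suc i) \<subseteq> Pf i \<union> N" using PS N(1) pi by blast
      have "card (Pf (Suc i)) \<le> card (Pf i \<union> N)" using sub finP N(2) by (intro card_mono) auto
      also have "\<dots> \<le> card (Pf i) + card N" by (rule card_Un_le)
      also have "\<dots> \<le> k * sum_list (take i costs) + k * (costs ! i)" using IH(1) N(3) by simp
      also have "\<dots> = k * sum_list (take (Suc i) costs)"
        using le by (simp add: take_Suc_conv_app_nth algebra_simps)
      finally have C: "card (Pf (Suc i)) \<le> k * sum_list (take (Suc i) costs)" .
      have D: "\<forall>v\<in>Pf (Suc i). in_nbrs E v \<subseteq> Pf (Suc i)"
      proof
        fix v assume v: "v \<in> Pf (Suc i)"
        have mono: "Pf i \<subseteq> Pf (Suc i)" using PS by blast
        show "in_nbrs E v \<subseteq> Pf (Suc i)"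
        proof (cases "v \<in> Pf i")
          case True then show ?thesis using IH(2) mono by blast
        next
          case False
          then have "v \<in> N" using v sub by blast
          then have "in_nbrs E v \<subseteq> pebbles (cs ! i) \<inter> V" using N(4) inV by blast
          then show ?thesis using pi mono by blast
        qed
      qed
      show "card (Pf (Suc i)) \<le> k * sum_list (take (Suc i) costs) \<and> (\<forall>v\<in>Pf (Suc i). in_nbrs E v \<subseteq> Pf (Suc i))"
        using C D by blast
    qed
  qed
  let ?L = "length costs"
  have "last cs = cs ! ?L" using len by (metis last_conv_nth diff_Suc_1 list.size(3) nat.distinct(1))
  then have "sinks V E \<subseteq> pebbles (cs ! ?L) \<inter> V" using trm
    unfolding terminal_config_def pebbles_def sinks_def by auto
  also have "\<dots> \<subseteq> Pf ?L" unfolding Pf_def by auto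
  finally have "sinks V E \<subseteq> Pf ?L" .
  moreover have "Pf ?L \<subseteq> V" unfolding Pf_def by auto
  ultimately show ?thesis using main[of ?L] by auto
qed


lemma step_class:
  assumes "mpp_step V E k g C C' c" "c \<noteq> g"
  shows "snd C' \<subseteq> snd C \<and> (\<forall>j. fst C' j \<subseteq> fst C j \<or> (\<exists>v. fst C' j = insert v (fst C j) \<and> in_nbrs E v \<subseteq> fst C j))"
  using assms unfolding mpp_step_def Let_def
proof (elim disjE exE conjE)
  fix S assume s: "selection k S" and h: "\<forall>(j, v)\<in>S. v \<in> V \<and> in_nbrs E v \<subseteq> fst C j"
    and c': "C' = (add_red (fst C) S, snd C)"
  show ?thesis
  proof (intro conjI allI)
    show "snd C' \<subseteq> snd C" using c' by simp
    fix j
    show "fst C' j \<subseteq> fst C j \<or> (\<exists>v. fst C' j = insert v (fst C j) \<and> in_nbrs E v \<subseteq> fst C j)"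
    proof (cases "\<exists>v. (j, v) \<in> S")
      case False then show ?thesis using c' by (auto simp: add_red_def)
    next
      case True
      then obtain v where v: "(j, v) \<in> S" by blast
      have "{w. (j, w) \<in> S} = {v}" using v selection_one[OF s] by blast
      then have "fst C' j = insert v (fst C j)" using c' by (auto simp: add_red_def)
      moreover have "in_nbrs E v \<subseteq> fst C j" using h v by auto
      ultimately show ?thesis by blast
    qed
  qed
qed (auto simp: split: if_splits)

definition V0 :: "nat set" where "V0 = {0,1,2,3,4,5}"
definition E0 :: "(nat \<times> nat) set" where "E0 = {(0,2),(1,2),(0,3),(1,3),(2,4),(3,4)}"

lemma in_nbrs_E0: "in_nbrs E0 4 = {2,3}" "in_nbrs E0 2 = {0,1}" "in_nbrs E0 3 = {0,1}"
  "in_nbrs E0 0 = {}" "in_nbrs E0 1 = {}" "in_nbrs E0 5 = {}"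
  by (auto simp: in_nbrs_def E0_def)

lemma sinks_E0: "sinks V0 E0 = {4, 5}"
  by (auto simp: sinks_def V0_def E0_def)

lemma dag0: "is_dag V0 E0"
  unfolding is_dag_def
proof (intro conjI)
  show "finite V0" by (simp add: V0_def)
  show "E0 \<subseteq> V0 \<times> V0" by (auto simp: V0_def E0_def)
  show "acyclic E0" by (rule acyclic_subset[OF acyclic_less]) (auto simp: E0_def)
qed

lemma io_lb:
  assumes st: "pebbling_strategy V0 E0 k 3 g cs costs" and g: "g \<noteq> 0" "g \<noteq> 1"
  shows "g \<le> sum_list costs"
proof (rule ccontr)
  assume nle: "\<not> g \<le> sum_list costs"
  have nog: "\<forall>i < length costs. costs ! i \<noteq> g"
  proof (intro allI impI notI)
    fix i assume "i < length costs" "costs ! i = g"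
    then have "g \<in> set costs" by (metis nth_mem)
    then show False using nle member_le_sum_list by blast
  qed
  have len: "length cs = Suc (length costs)" and c0: "cs ! 0 = initial_config"
    and trm: "terminal_config V0 E0 (last cs)"
    and valid: "\<forall>i < length cs. valid_config k 3 (cs ! i)"
    and steps: "\<forall>i < length costs. mpp_step V0 E0 k g (cs ! i) (cs ! Suc i) (costs ! i)"
    using st unfolding pebbling_strategy_def by auto
  have cl: "snd (cs ! Suc i) \<subseteq> snd (cs ! i) \<and> (\<forall>j. fst (cs ! Suc i) j \<subseteq> fst (cs ! i) j \<or>
      (\<exists>v. fst (cs ! Suc i) j = insert v (fst (cs ! i) j) \<and> in_nbrs E0 v \<subseteq> fst (cs ! i) j))"
    if "i < length costs" for i
    using step_class[of V0 E0 k g "cs ! i" "cs ! Suc i" "costs ! i"] steps nog that by blast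
  let ?L = "length costs"
  have B0: "i \<le> ?L \<longrightarrow> snd (cs ! i) = {}" for i
  proof (induction i)
    case 0 then show ?case using c0 by (simp add: initial_config_def)
  next
    case (Suc i) then show ?case using cl[of i] by auto
  qed
  have "last cs = cs ! ?L" using len by (metis last_conv_nth diff_Suc_1 list.size(3) nat.distinct(1))
  then have "4 \<in> snd (cs ! ?L) \<union> (\<Union>j. fst (cs ! ?L) j)"
    using trm sinks_E0 unfolding terminal_config_def by auto
  then obtain j where j: "4 \<in> fst (cs ! ?L) j" using B0[of ?L] by auto
  have R0: "fst (cs ! 0) j = {}" using c0 by (simp add: initial_config_def)
  obtain t where t: "t < ?L" "4 \<notin> fst (cs ! t) j" "4 \<in> fst (cs ! Suc t) j"
    using transition_exists[of "\<lambda>t. 4 \<in> fst (cs ! t) j" ?L] j R0 by auto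
  from cl[OF t(1)] t(2,3) obtain v where "fst (cs ! Suc t) j = insert v (fst (cs ! t) j)"
    "in_nbrs E0 v \<subseteq> fst (cs ! t) j" by blast
  with t have "v = 4" "{2,3} \<subseteq> fst (cs ! t) j" using in_nbrs_E0 by auto
  then obtain s where s: "s < t" "\<not> {2,3} \<subseteq> fst (cs ! s) j" "{2,3} \<subseteq> fst (cs ! Suc s) j"
    using transition_exists[of "\<lambda>s. {2,3} \<subseteq> fst (cs ! s) j" t] R0 by auto
  have sL: "s < ?L" using s t by simp
  from cl[OF sL] s(2,3) obtain w where w: "fst (cs ! Suc s) j = insert w (fst (cs ! s) j)"
    "in_nbrs E0 w \<subseteq> fst (cs ! s) j" by blast
  have "w = 2 \<or> w = 3" using w(1) s(2,3) by auto
  then have "{0,1} \<subseteq> fst (cs ! s) j" using w(2) in_nbrs_E0 by auto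
  then have sub: "{0,1,2,3} \<subseteq> fst (cs ! Suc s) j" using w(1) s(3) by auto
  have "valid_config k 3 (cs ! Suc s)" using valid len sL by simp
  moreover have "j < k"
  proof (rule ccontr)
    assume "\<not> j < k"
    then have "fst (cs ! Suc s) j = {}" using \<open>valid_config k 3 (cs ! Suc s)\<close>
      unfolding valid_config_def by simp
    then show False using sub by auto
  qed
  ultimately have "card (fst (cs ! Suc s) j) \<le> 3" "finite (fst (cs ! Suc s) j)"
    unfolding valid_config_def by auto
  moreover have "card {0::nat,1,2,3} \<le> card (fst (cs ! Suc s) j)"
    using sub calculation(2) by (rule card_mono[rotated])
  ultimately show False by simp
qed


fun run :: "'v set \<Rightarrow> ('v \<times> 'v) set \<Rightarrow> nat \<Rightarrow> nat \<Rightarrow> nat \<Rightarrow> 'v config \<Rightarrow> (nat \<times> 'v config) list \<Rightarrow> bool" where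
  "run V E k r g C [] = True"
| "run V E k r g C ((c, C') # rest) = (mpp_step V E k g C C' c \<and> valid_config k r C' \<and> run V E k r g C' rest)"

lemma run_nth: "run V E k r g C steps \<Longrightarrow> i < length steps \<Longrightarrow>
   mpp_step V E k g ((C # map snd steps) ! i) ((C # map snd steps) ! Suc i) (map fst steps ! i) \<and>
   valid_config k r ((C # map snd steps) ! Suc i)"
proof (induction steps arbitrary: C i)
  case Nil then show ?case by simp
next
  case (Cons st rest)
  obtain c C' where st: "st = (c, C')" by (cases st)
  show ?case
  proof (cases i)
    case 0 then show ?thesis using Cons.prems st by simp
  next
    case (Suc i')
    then show ?thesis using Cons.prems Cons.IH[of C' i'] st by simp
  qed
qed

lemma run_strategy:
  assumes "run V E k r g initial_config steps"
    "terminal_config V E (last (initial_config # map snd steps))"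
  shows "has_strategy V E k r g"
    "OPT V E k r g \<le> sum_list (map fst steps)"
proof -
  have ps: "pebbling_strategy V E k r g (initial_config # map snd steps) (map fst steps)"
    unfolding pebbling_strategy_def
  proof (intro conjI allI impI)
    show "length (initial_config # map snd steps) = Suc (length (map fst steps))" by simp
    show "(initial_config # map snd steps) ! 0 = initial_config" by simp
    show "terminal_config V E (last (initial_config # map snd steps))" by (rule assms(2))
    fix i
    assume "i < length (initial_config # map snd steps)"
    then show "valid_config k r ((initial_config # map snd steps) ! i)"
      using run_nth[OF assms(1), of "i - 1"]
      by (cases i) (auto simp: valid_config_def initial_config_def)
  next
    fix i assume "i < length (map fst steps)"
    then show "mpp_step V E k g ((initial_config # map snd steps) ! i) ((initial_config # map snd steps) ! Suc i) (map fst steps ! i)"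
      using run_nth[OF assms(1), of i] by simp
  qed
  then show "has_strategy V E k r g" unfolding has_strategy_def by blast
  show "OPT V E k r g \<le> sum_list (map fst steps)" unfolding OPT_def
    using ps by (intro Least_le) blast
qed

lemma opt_attained: "has_strategy V E k r g \<Longrightarrow>
   \<exists>cs costs. pebbling_strategy V E k r g cs costs \<and> sum_list costs = OPT V E k r g"
  unfolding has_strategy_def OPT_def by (rule LeastI_ex) blast

definition mk :: "'v set \<Rightarrow> 'v set \<Rightarrow> nat \<Rightarrow> 'v set" where
  "mk A B = (\<lambda>j. if j = 0 then A else if j = 1 then B else {})"

lemma comp0: "v \<in> V \<Longrightarrow> in_nbrs E v \<subseteq> A \<Longrightarrow> 0 < k \<Longrightarrow> A' = insert v A \<Longrightarrow>
  mpp_step V E k g (mk A B, X) (mk A' B, X) 1"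
  unfolding mpp_step_def Let_def
  by (intro disjI2 disjI1 exI[of _ "{(0, v)}"])
     (auto simp: selection_def add_red_def mk_def fun_eq_iff)

lemma comp01: "v \<in> V \<Longrightarrow> in_nbrs E v \<subseteq> A \<Longrightarrow> w \<in> V \<Longrightarrow> in_nbrs E w \<subseteq> B \<Longrightarrow> 1 < k \<Longrightarrow>
  A' = insert v A \<Longrightarrow> B' = insert w B \<Longrightarrow>
  mpp_step V E k g (mk A B, X) (mk A' B', X) 1"
  unfolding mpp_step_def Let_def
  by (intro disjI2 disjI1 exI[of _ "{(0, v), (1, w)}"])
     (auto simp: selection_def add_red_def mk_def fun_eq_iff)

lemma save0: "v \<in> A \<Longrightarrow> 0 < k \<Longrightarrow> X' = insert v X \<Longrightarrow>
  mpp_step V E k g (mk A B, X) (mk A B, X') g"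
  unfolding mpp_step_def Let_def
  by (intro disjI1 exI[of _ "{(0, v)}"]) (auto simp: selection_def mk_def)

lemma load0: "v \<in> X \<Longrightarrow> 0 < k \<Longrightarrow> A' = insert v A \<Longrightarrow>
  mpp_step V E k g (mk A B, X) (mk A' B, X) g"
  unfolding mpp_step_def Let_def
  by (intro disjI2 disjI1 exI[of _ "{(0, v)}"])
     (auto simp: selection_def add_red_def mk_def fun_eq_iff)

lemma rm0: "v \<in> A \<Longrightarrow> A' = A - {v} \<Longrightarrow>
  mpp_step V E k g (mk A B, X) (mk A' B, X) 0"
  unfolding mpp_step_def Let_def
  by (intro disjI2 conjI disjI1 exI[of _ 0] exI[of _ v]) (auto simp: mk_def fun_eq_iff)


lemma init_mk: "initial_config = (mk {} {}, {})"
  by (auto simp: initial_config_def mk_def fun_eq_iff)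

lemmas solve = V0_def in_nbrs_def E0_def valid_config_def mk_def

definition steps1 :: "(nat \<times> nat config) list" where
  "steps1 = [(1, (mk {0} {}, {})), (1, (mk {0,1} {}, {})), (1, (mk {0,1,2} {}, {})),
             (1, (mk {0,1,2,3} {}, {})), (1, (mk {0,1,2,3,4} {}, {})), (1, (mk {0,1,2,3,4,5} {}, {}))]"

lemma run1: "run V0 E0 1 12 100 initial_config steps1"
  unfolding steps1_def init_mk run.simps
  apply (intro conjI)
  apply (rule comp0; auto simp: solve)
  apply (auto simp: solve)[1]
  apply (rule comp0; auto simp: solve)
  apply (auto simp: solve)[1]
  apply (rule comp0; auto simp: solve)
  apply (auto simp: solve)[1]
  apply (rule comp0; auto simp: solve)
  apply (auto simp: solve)[1]
  apply (rule comp0; auto simp: solve)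
  apply (auto simp: solve)[1]
  apply (rule comp0; auto simp: solve)
  apply (auto simp: solve)[1]
  apply simp
  done

definition steps2 :: "(nat \<times> nat config) list" where
  "steps2 = [(1, (mk {0} {5}, {})), (1, (mk {0,1} {5}, {})), (1, (mk {0,1,2} {5}, {})),
             (1, (mk {0,1,2,3} {5}, {})), (1, (mk {0,1,2,3,4} {5}, {}))]"

lemma run2: "run V0 E0 2 6 100 initial_config steps2"
  unfolding steps2_def init_mk run.simps
  apply (intro conjI)
  apply (rule comp01; auto simp: solve)
  apply (auto simp: solve)[1]
  apply (rule comp0; auto simp: solve)
  apply (auto simp: solve)[1]
  apply (rule comp0; auto simp: solve)
  apply (auto simp: solve)[1]
  apply (rule comp0; auto simp: solve)
  apply (auto simp: solve)[1]
  apply (rule comp0; auto simp: solve)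
  apply (auto simp: solve)[1]
  apply simp
  done

definition steps4 :: "(nat \<times> nat config) list" where
  "steps4 = [(1, (mk {0} {5}, {})), (1, (mk {0,1} {5}, {})), (1, (mk {0,1,2} {5}, {})),
             (100, (mk {0,1,2} {5}, {2})), (0, (mk {0,1} {5}, {2})), (1, (mk {0,1,3} {5}, {2})),
             (0, (mk {1,3} {5}, {2})), (0, (mk {3} {5}, {2})), (100, (mk {2,3} {5}, {2})),
             (1, (mk {2,3,4} {5}, {2}))]"

lemma run4: "run V0 E0 4 3 100 initial_config steps4"
  unfolding steps4_def init_mk run.simps
  apply (intro conjI)
  apply (rule comp01; auto simp: solve)
  apply (auto simp: solve)[1]
  apply (rule comp0; auto simp: solve)
  apply (auto simp: solve)[1]
  apply (rule comp0; auto simp: solve)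
  apply (auto simp: solve)[1]
  apply (rule save0; auto simp: solve)
  apply (auto simp: solve)[1]
  apply (rule rm0; auto simp: solve)
  apply (auto simp: solve)[1]
  apply (rule comp0; auto simp: solve)
  apply (auto simp: solve)[1]
  apply (rule rm0; auto simp: solve)
  apply (auto simp: solve)[1]
  apply (rule rm0; auto simp: solve)
  apply (auto simp: solve)[1]
  apply (rule load0; auto simp: solve)
  apply (auto simp: solve)[1]
  apply (rule comp0; auto simp: solve)
  apply (auto simp: solve)[1]
  apply simp
  done

lemma term1: "terminal_config V0 E0 (last (initial_config # map snd steps1))"
  by (auto simp: steps1_def terminal_config_def sinks_E0 mk_def)
lemma term2: "terminal_config V0 E0 (last (initial_config # map snd steps2))"
  by (auto simp: steps2_def terminal_config_def sinks_E0 mk_def)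
lemma term4: "terminal_config V0 E0 (last (initial_config # map snd steps4))"
  by (auto simp: steps4_def terminal_config_def sinks_E0 mk_def)


theorem lemma10:
  shows "\<exists>(V :: nat set) E g r0. is_dag V E \<and> g > 0 \<and> r0 > 0 \<and> 4 dvd r0 \<and>
     (\<forall>j\<in>{1, 2, 4}. has_strategy V E j (r0 div j) g) \<and>
     OPT V E 2 (r0 div 2) g < OPT V E 1 (r0 div 1) g \<and>
     OPT V E 2 (r0 div 2) g < OPT V E 4 (r0 div 4) g"
proof -
  have d: "is_dag V0 E0" by (rule dag0)
  have h1: "has_strategy V0 E0 1 12 100" by (rule run_strategy(1)[OF run1 term1])
  have h2: "has_strategy V0 E0 2 6 100" by (rule run_strategy(1)[OF run2 term2])
  have h4: "has_strategy V0 E0 4 3 100" by (rule run_strategy(1)[OF run4 term4])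
  have o2: "OPT V0 E0 2 6 100 \<le> 5"
    using run_strategy(2)[OF run2 term2] by (simp add: steps2_def)
  have o4: "100 \<le> OPT V0 E0 4 3 100"
  proof -
    obtain cs costs where "pebbling_strategy V0 E0 4 3 100 cs costs"
      "sum_list costs = OPT V0 E0 4 3 100" using opt_attained[OF h4] by blast
    with io_lb[of 4 100 cs costs] show ?thesis by simp
  qed
  have o1: "6 \<le> OPT V0 E0 1 12 100"
  proof -
    obtain cs costs where st: "pebbling_strategy V0 E0 1 12 100 cs costs"
      "sum_list costs = OPT V0 E0 1 12 100" using opt_attained[OF h1] by blast
    have EV: "E0 \<subseteq> V0 \<times> V0" and fV: "finite V0" using dag0 by (auto simp: is_dag_def)
    obtain P where P: "P \<subseteq> V0" "card P \<le> 1 * sum_list costs" "sinks V0 E0 \<subseteq> P"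
      "\<forall>v\<in>P. in_nbrs E0 v \<subseteq> P" using count_lb[OF st(1) EV fV] by blast
    have "4 \<in> P" "5 \<in> P" using P(3) sinks_E0 by auto
    then have "{2,3} \<subseteq> P" using P(4) in_nbrs_E0 by metis
    then have "{0,1} \<subseteq> P" using P(4) in_nbrs_E0 by (metis insert_subset)
    have "{0,1,2,3,4,5} \<subseteq> P" using \<open>{0,1} \<subseteq> P\<close> \<open>{2,3} \<subseteq> P\<close> \<open>4 \<in> P\<close> \<open>5 \<in> P\<close> by auto
    moreover have "finite P" using P(1) fV finite_subset by blast
    ultimately have "card {0::nat,1,2,3,4,5} \<le> card P" by (rule card_mono[rotated])
    then show ?thesis using P(2) st(2) by simp
  qed
  show ?thesis
    by (intro exI[of _ V0] exI[of _ E0] exI[of _ "100::nat"] exI[of _ "12::nat"])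
       (use d h1 h2 h4 o1 o2 o4 in simp)
qed

end
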